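(* Let $(A,B,C,D)\in\mathcal{M}_k^j(\rho)$. Then $C_p,D_p\neq 0$ for all $p=1,2$. In particular, $$\left\{\Omega_j\omega_r\::\:r=\tfrac{j}{2},j,k-\tfrac{j}{2}-1,k-1\right\}\subset\mathrm{Eval}(G),$$ with $C_1\in\mathrm{Evec}(G,\Omega_j\omega_{\frac{j}{2}})$, $C_2\in\mathrm{Evec}(G,\Omega_j\omega_j)$, $D_1\in\mathrm{Ecovec}(G,\Omega_j\omega_{k-\frac{j}{2}-1})$, $D_2\in\mathrm{Ecovec}(G,\Omega_j\omega_{k-1})$.
   Context: Non-singular monad matrices are $(A,B,C,D)$ with $A\in GL(k,\mathbb{C})$, $B\in Mat_{k\times k}(\mathbb{C})$, $C\in Mat_{k\times 2}(\mathbb{C})$, $D\in Mat_{2\times k}(\mathbb{C})$, satisfying $[A,B]+CD=0$ and the full-rank conditions, considered up to $(A,B,C,D)\sim(hAh^{-1},hBh^{-1},hC,Dh^{-1})$; $C_p$ is the $p$-th column of $C$ and $D_p$ the $p$-th row of $D$. Fix $j\in\mathbb{Z}_{2k}$ even and $\omega\in(-\pi,\pi)$. $\mathcal{M}_k^j(\rho)$ is the set of such matrices for which there is $g\in GL(k,\mathbb{C})$ with $e^{\imath\frac{j\pi}{k}}A=gAg^{-1}$, $e^{\imath\frac{\pi}{k}}B=g(B-C_1D_1A^{-1})g^{-1}$, $e^{\imath\frac{\pi}{2k}}e^{\imath\frac{j\pi}{4k}}C_1=e^{\imath\omega}gC_2$, $e^{\imath\frac{\pi}{2k}}e^{\imath\frac{3j\pi}{4k}}C_2=e^{-\imath\omega}gAC_1$,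 $e^{\imath\frac{\pi}{2k}}e^{\imath\frac{3j\pi}{4k}}D_1=e^{-\imath\omega}D_2g^{-1}$, $e^{\imath\frac{\pi}{2k}}e^{\imath\frac{j\pi}{4k}}D_2=e^{\imath\omega}D_1A^{-1}g^{-1}$ (invariance under $\rho(C_{2k}^{j,\omega})$). Then with $G=e^{-\imath\frac{j\pi}{2k}}g^2A$ one has $e^{\imath\frac{2j\pi}{k}}A=GAG^{-1}$, $e^{\imath\frac{2\pi}{k}}B=GBG^{-1}$, $e^{\imath\frac{\pi}{k}}C=GC\,\mathrm{adj}(\sigma_{2j\pi/k})$, $e^{\imath\frac{\pi}{k}}D=\sigma_{2j\pi/k}DG^{-1}$, where $\sigma_\varphi=\mathrm{diag}(e^{-\imath\frac{3\varphi}{4}},e^{-\imath\frac{\varphi}{4}})$, $\mathrm{adj}(\sigma)=\det(\sigma)\sigma^{-1}$. Notation: $\Omega_j=e^{\imath\frac{(2-j)\pi}{2k}}$, $\omega_r=e^{\imath\frac{2\pi r}{k}}$ (indices mod $k$); $\mathrm{Evec}(G,\lambda)$ is the $\lambda$-eigenspace of $G$ and $\mathrm{Ecovec}(G,\lambda)$ the space of row vectors $v$ with $vG=\lambda v$. *)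

theory Defs
  imports "HOL-Analysis.Analysis"
begin

(* Matrices are k x k complex matrices indexed by a finite type 'k, k = CARD('k).
   C in Mat_{k x 2} is given by its two columns c1 c2 (C_1, C_2);
   D in Mat_{2 x k} is given by its two rows d1 d2 (D_1, D_2). *)

definition outer :: "complex^'k \<Rightarrow> complex^'k \<Rightarrow> complex^'k^'k" where
  "outer u v = (\<chi> i l. u$i * v$l)"

(* the matrix C D = C_1 D_1 + C_2 D_2 *)
definition CD_mat :: "complex^'k \<Rightarrow> complex^'k \<Rightarrow> complex^'k \<Rightarrow> complex^'k \<Rightarrow> complex^'k^'k" where
  "CD_mat c1 c2 d1 d2 = outer c1 d1 + outer c2 d2"

(* row vector applied to column vector *)
definition rowapp :: "complex^'k \<Rightarrow> complex^'k \<Rightarrow> complex" where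
  "rowapp d v = (\<Sum>i\<in>UNIV. d$i * v$i)"

(* Non-singular monad matrices: A invertible, [A,B] + CD = 0, and the full rank conditions:
   for all (x,y), the (2k+2) x k matrix (A - x; B - y; D) is injective and the
   k x (2k+2) matrix (-(B - y), A - x, C) is surjective. *)
definition monad_nonsingular ::
  "complex^'k^'k \<Rightarrow> complex^'k^'k \<Rightarrow> complex^'k \<Rightarrow> complex^'k \<Rightarrow> complex^'k \<Rightarrow> complex^'k \<Rightarrow> bool" where
  "monad_nonsingular A B c1 c2 d1 d2 \<longleftrightarrow>
     invertible A \<and>
     (A ** B - B ** A) + CD_mat c1 c2 d1 d2 = 0 \<and>
     (\<forall>x y :: complex.
        (\<forall>v. (A - mat x) *v v = 0 \<and> (B - mat y) *v v = 0 \<and> rowapp d1 v = 0 \<and> rowapp d2 v = 0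
              \<longrightarrow> v = 0) \<and>
        (\<forall>w. \<exists>u1 u2 a b. w = - ((B - mat y) *v u1) + (A - mat x) *v u2 + a *s c1 + b *s c2))"

(* invariance under rho(C_{2k}^{j,omega}) witnessed by g *)
definition rho_invariant_by ::
  "nat \<Rightarrow> real \<Rightarrow> complex^'k^'k \<Rightarrow> complex^'k^'k \<Rightarrow> complex^'k \<Rightarrow> complex^'k \<Rightarrow> complex^'k \<Rightarrow> complex^'k
   \<Rightarrow> complex^'k^'k \<Rightarrow> bool" where
  "rho_invariant_by j \<omega> A B c1 c2 d1 d2 g \<longleftrightarrow>
     (let k = real CARD('k) in
     invertible g \<and>
     mat (cis (real j * pi / k)) ** A = g ** A ** matrix_inv g \<and>
     mat (cis (pi / k)) ** B = g ** (B - outer c1 d1 ** matrix_inv A) ** matrix_inv g \<and>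
     (cis (pi / (2 * k)) * cis (real j * pi / (4 * k))) *s c1 = cis \<omega> *s (g *v c2) \<and>
     (cis (pi / (2 * k)) * cis (3 * real j * pi / (4 * k))) *s c2 = cis (- \<omega>) *s (g *v (A *v c1)) \<and>
     (cis (pi / (2 * k)) * cis (3 * real j * pi / (4 * k))) *s d1 = cis (- \<omega>) *s (d2 v* matrix_inv g) \<and>
     (cis (pi / (2 * k)) * cis (real j * pi / (4 * k))) *s d2 = cis \<omega> *s (d1 v* (matrix_inv A ** matrix_inv g)))"

(* the set M_k^j(rho) *)
definition M_rho ::
  "nat \<Rightarrow> real \<Rightarrow> ((complex^'k^'k) \<times> (complex^'k^'k) \<times> (complex^'k) \<times> (complex^'k) \<times> (complex^'k) \<times> (complex^'k)) set" where
  "M_rho j \<omega> = {(A, B, c1, c2, d1, d2). monad_nonsingular A B c1 c2 d1 d2 \<and>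
                   (\<exists>g. rho_invariant_by j \<omega> A B c1 c2 d1 d2 g)}"

definition Evec :: "complex^'k^'k \<Rightarrow> complex \<Rightarrow> (complex^'k) set" where
  "Evec G lam = {v. G *v v = lam *s v}"

definition Ecovec :: "complex^'k^'k \<Rightarrow> complex \<Rightarrow> (complex^'k) set" where
  "Ecovec G lam = {v. v v* G = lam *s v}"

definition Eval :: "complex^'k^'k \<Rightarrow> complex set" where
  "Eval G = {lam. \<exists>v. v \<noteq> 0 \<and> G *v v = lam *s v}"

(* Omega_j = e^{i (2-j) pi / (2k)},  omega_r = e^{i 2 pi r / k} *)
definition Omega_j :: "nat \<Rightarrow> nat \<Rightarrow> complex" where
  "Omega_j k j = cis ((2 - real j) * pi / (2 * real k))"

definition omega_r :: "nat \<Rightarrow> int \<Rightarrow> complex" where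
  "omega_r k r = cis (2 * pi * real_of_int r / real k)"

end

theory Submission
  imports Defs "HOL-Computational_Algebra.Fundamental_Theorem_Algebra"
begin

definition mpw :: "complex^'n^'n \<Rightarrow> nat \<Rightarrow> complex^'n \<Rightarrow> complex^'n" where
  "mpw M i v = (((*v) M) ^^ i) v"

definition opev :: "complex poly \<Rightarrow> complex^'n^'n \<Rightarrow> complex^'n \<Rightarrow> complex^'n" where
  "opev p M v = (\<Sum>i\<le>degree p. coeff p i *s mpw M i v)"

lemma mpw_Suc: "mpw M (Suc i) v = M *v mpw M i v"
  by (simp add: mpw_def)

lemma opev_upto:
  assumes "degree p \<le> n"
  shows "opev p M v = (\<Sum>i\<le>n. coeff p i *s mpw M i v)"
  unfolding opev_def
  by (rule sum.mono_neutral_left) (use assms in \<open>auto simp: coeff_eq_0\<close>)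

lemma opev_add: "opev (p + q) M v = opev p M v + opev q M v"
proof -
  let ?n = "max (degree p) (degree q)"
  have "degree (p+q) \<le> ?n" by (simp add: degree_add_le)
  then show ?thesis
    by (simp add: opev_upto[of _ ?n] vector_sadd_rdistrib sum.distrib)
qed

lemma opev_smult: "opev (smult c p) M v = c *s opev p M v"
  by (simp add: opev_upto[of "smult c p" "degree p"] opev_def vec.scale_sum_right vector_smult_assoc)

lemma opev_zero[simp]: "opev 0 M v = 0"
  by (simp add: opev_def)

lemma opev_const: "opev [:c:] M v = c *s v"
  by (simp add: opev_def mpw_def)

lemma mat_sum: "M *v (\<Sum>i\<in>A. f i) = (\<Sum>i\<in>A. M *v f i)"
  by (induct A rule: infinite_finite_induct) (auto simp: matrix_vector_right_distrib)

lemma opev_pCons0: "opev (pCons 0 q) M v = M *v opev q M v"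
proof -
  have "opev (pCons 0 q) M v = (\<Sum>i\<le>Suc (degree q). coeff (pCons 0 q) i *s mpw M i v)"
    by (rule opev_upto) (simp add: degree_pCons_le)
  also have "\<dots> = (\<Sum>i\<le>degree q. coeff q i *s mpw M (Suc i) v)"
    by (subst sum.atMost_Suc_shift) simp
  also have "\<dots> = M *v opev q M v"
    by (simp add: opev_def mat_sum mpw_Suc vector_scalar_commute)
  finally show ?thesis .
qed

lemma opev_monom: "opev (monom c n) M v = c *s mpw M n v"
proof -
  have e: "(if n = i then c else 0) *s x = (if n = i then c *s x else 0)" for i and x :: "complex^'n" by simp
  show ?thesis by (simp add: opev_upto[of _ n] degree_monom_le e)
qed

lemma opev_sum: "opev (\<Sum>x\<in>A. f x) M v = (\<Sum>x\<in>A. opev (f x) M v)"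
  by (induct A rule: infinite_finite_induct) (auto simp: opev_add)

lemma opev_lin: "opev ([:-z,1:] * q) M v = M *v opev q M v - z *s opev q M v"
proof -
  have eq: "[:-z,1:] * q = smult (-z) q + pCons 0 q" by simp
  show ?thesis unfolding eq by (simp only: opev_add opev_smult opev_pCons0) (simp add: vector_smult_lneg)
qed

locale inv_sub =
  fixes S :: "(complex^'n) set" and M :: "complex^'n^'n"
  assumes add: "\<And>x y. x\<in>S \<Longrightarrow> y\<in>S \<Longrightarrow> x+y \<in> S"
    and scl: "\<And>c x. x\<in>S \<Longrightarrow> c *s x \<in> S"
    and inv: "\<And>x. x\<in>S \<Longrightarrow> M *v x \<in> S"
begin

lemma mpw_in: "v \<in> S \<Longrightarrow> mpw M i v \<in> S"
  by (induct i) (auto simp: mpw_def inv)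

lemma sum_in: "v \<in> S \<Longrightarrow> (\<And>x. x\<in>A \<Longrightarrow> f x \<in> S) \<Longrightarrow> sum f A \<in> S"
proof (induct A rule: infinite_finite_induct)
  case (infinite A) then show ?case using scl[of v 0] by simp
next
  case empty then show ?case using scl[of v 0] by simp
next
  case (insert x F) then show ?case by (simp add: add)
qed

lemma opev_in: "v \<in> S \<Longrightarrow> opev p M v \<in> S"
  unfolding opev_def by (rule sum_in) (auto intro: scl mpw_in)

lemma eig_from_poly:
  assumes "v \<in> S" "v \<noteq> 0"
  shows "p \<noteq> 0 \<Longrightarrow> opev p M v = 0 \<Longrightarrow> \<exists>w\<in>S. w \<noteq> 0 \<and> (\<exists>l. M *v w = l *s w)"
proof (induction "degree p" arbitrary: p rule: less_induct)
  case less
  show ?case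
  proof (cases "degree p = 0")
    case True
    then obtain c where p: "p = [:c:]" by (metis degree_eq_zeroE)
    with less.prems have "c \<noteq> 0" by simp
    with less.prems p assms show ?thesis by (simp add: opev_const)
  next
    case False
    then have "\<not> constant (poly p)" by (simp add: constant_degree)
    then obtain z where "poly p z = 0" using fundamental_theorem_of_algebra by blast
    then have "[:-z,1:] dvd p" by (simp add: poly_eq_0_iff_dvd)
    then obtain q where pq: "p = [:-z,1:] * q" by (auto elim: dvdE)
    with less.prems have q0: "q \<noteq> 0" by auto
    have "degree p = degree [:-z,1:] + degree q" using q0 by (subst pq, intro degree_mult_eq) auto
    then have dq: "degree q < degree p" by simp
    show ?thesis
    proof (cases "opev q M v = 0")
      case True
      from less.hyps[OF dq q0 True] show ?thesis .
    next
      case False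
      have "opev p M v = M *v opev q M v - z *s opev q M v"
        unfolding pq by (rule opev_lin)
      then have "M *v opev q M v - z *s opev q M v = 0"
        using less.prems by simp
      then have "M *v opev q M v = z *s opev q M v" by simp
      with False opev_in[OF assms(1)] show ?thesis by blast
    qed
  qed
qed

lemma annih:
  fixes v :: "complex^'n"
  shows "\<exists>p. p \<noteq> 0 \<and> opev p M v = 0"
proof -
  let ?N = "CARD('n)"
  let ?f = "\<lambda>i. mpw M i v"
  show ?thesis
  proof (cases "inj_on ?f {..?N}")
    case False
    then obtain i j where ij: "i \<noteq> j" "?f i = ?f j" unfolding inj_on_def by blast
    let ?p = "monom (1::complex) i + smult (-1) (monom 1 j)"
    have c1: "coeff ?p i = 1" using ij by simp
    have "?p \<noteq> 0" proof
      assume h: "?p = 0"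
      have "coeff ?p i = coeff (0::complex poly) i" using h by metis
      with c1 show False by simp
    qed
    moreover have "opev ?p M v = 0"
      using ij by (simp only: opev_add opev_smult opev_monom) (simp add: vector_smult_lneg)
    ultimately show ?thesis by blast
  next
    case True
    let ?X = "?f ` {..?N}"
    have "card ?X = Suc ?N" using True by (simp add: card_image)
    then have "card ?X > vec.dim ?X" using dim_subset_UNIV_cart_gen[of ?X] by simp
    then have dep: "vec.dependent ?X" by (intro vec.dependent_biggerset_general) simp
    have "\<exists>T u. finite T \<and> T \<subseteq> ?X \<and> (\<Sum>w\<in>T. u w *s w) = 0 \<and> (\<exists>w\<in>T. u w \<noteq> 0)"
      using dep by (simp only: vec.dependent_explicit)
    then obtain T u where T: "finite T" "T \<subseteq> ?X" "(\<Sum>w\<in>T. u w *s w) = 0" and ex: "\<exists>w\<in>T. u w \<noteq> 0"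
      by blast
    from ex obtain w0 where w0: "w0 \<in> T" "u w0 \<noteq> 0" by blast
    define idx where "idx = the_inv_into {..?N} ?f"
    have idx: "?f (idx w) = w" if "w \<in> T" for w
    proof -
      have "w \<in> ?X" using that T(2) by blast
      then show ?thesis unfolding idx_def by (rule f_the_inv_into_f[OF True])
    qed
    have idxinj: "w = w'" if "w \<in> T" "w' \<in> T" "idx w = idx w'" for w w'
    proof -
      have "w = ?f (idx w)" using idx[OF that(1)] by simp
      also have "\<dots> = ?f (idx w')" using that(3) by simp
      also have "\<dots> = w'" using idx[OF that(2)] by simp
      finally show ?thesis .
    qed
    let ?p = "\<Sum>w\<in>T. monom (u w) (idx w)"
    have "coeff ?p (idx w0) = (\<Sum>w\<in>T. if w = w0 then u w else 0)"
      unfolding coeff_sum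
    proof (rule sum.cong)
      fix w assume "w \<in> T"
      then have "idx w = idx w0 \<longleftrightarrow> w = w0" using idxinj[OF _ w0(1)] by blast
      then show "coeff (monom (u w) (idx w)) (idx w0) = (if w = w0 then u w else 0)" by simp
    qed simp
    also have "\<dots> = u w0" using w0 T by simp
    finally have c: "coeff ?p (idx w0) = u w0" .
    have "?p \<noteq> 0"
    proof
      assume h: "?p = 0"
      have "coeff ?p (idx w0) = coeff (0::complex poly) (idx w0)" using h by metis
      with c w0 show False by simp
    qed
    moreover have "opev ?p M v = (\<Sum>w\<in>T. u w *s w)"
      unfolding opev_sum opev_monom by (rule sum.cong) (simp_all add: idx)
    then have "opev ?p M v = 0" using T(3) by simp
    ultimately show ?thesis by blast
  qed
qed

lemma eig_exists:
  assumes "v \<in> S" "v \<noteq> 0"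
  shows "\<exists>w\<in>S. w \<noteq> 0 \<and> (\<exists>l. M *v w = l *s w)"
  using annih[of v] eig_from_poly[OF assms] by blast

end


lemma common_eig:
  fixes A B :: "complex^'n^'n"
  assumes AB: "A ** B = B ** A"
  shows "\<exists>v x y. v \<noteq> 0 \<and> A *v v = x *s v \<and> B *v v = y *s v"
proof -
  interpret U: inv_sub UNIV A by unfold_locales auto
  have "(1::complex^'n) \<noteq> 0" by (simp add: vec_eq_iff)
  then obtain w x where w: "w \<noteq> 0" "A *v w = x *s w" using U.eig_exists[of 1] by blast
  let ?S = "{u. A *v u = x *s u}"
  interpret S: inv_sub ?S B
  proof unfold_locales
    fix u v assume "u \<in> ?S" "v \<in> ?S" then show "u + v \<in> ?S"
      by (simp add: matrix_vector_right_distrib vector_add_ldistrib)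
  next
    fix c u assume "u \<in> ?S" then show "c *s u \<in> ?S"
      by (simp add: vector_scalar_commute vector_smult_assoc mult.commute)
  next
    fix u assume "u \<in> ?S"
    then have "A *v (B *v u) = x *s (B *v u)"
    proof -
      assume h: "u \<in> ?S"
      have "A *v (B *v u) = (A ** B) *v u" by (simp add: matrix_vector_mul_assoc)
      also have "\<dots> = B *v (A *v u)" by (simp add: AB matrix_vector_mul_assoc)
      also have "\<dots> = x *s (B *v u)" using h by (simp add: vector_scalar_commute)
      finally show ?thesis .
    qed
    then show "B *v u \<in> ?S" by simp
  qed
  from S.eig_exists[of w] w obtain v y where "v \<in> ?S" "v \<noteq> 0" "B *v v = y *s v" by auto
  then show ?thesis by blast
qed

lemma common_eig_left:
  fixes A B :: "complex^'n^'n"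
  assumes AB: "A ** B = B ** A"
  shows "\<exists>v x y. v \<noteq> 0 \<and> v v* A = x *s v \<and> v v* B = y *s v"
proof -
  have "transpose A ** transpose B = transpose B ** transpose A"
    by (metis AB matrix_transpose_mul)
  from common_eig[OF this] show ?thesis by simp
qed

lemma rowapp_mv: "rowapp v (M *v u) = rowapp (v v* M) u"
  unfolding rowapp_def matrix_vector_mult_def vector_matrix_mult_def
  by (simp add: sum_distrib_left sum_distrib_right mult.assoc mult.left_commute) (rule sum.swap)

lemma rowapp_add: "rowapp v (x + y) = rowapp v x + rowapp v y"
  unfolding rowapp_def by (simp add: distrib_left sum.distrib)

lemma rowapp_neg: "rowapp v (- x) = - rowapp v x"
  unfolding rowapp_def by (simp add: sum_negf)

lemma rowapp_zero_left: "rowapp 0 x = 0"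
  unfolding rowapp_def by simp

lemma rowapp_zero_right: "rowapp v 0 = 0"
  unfolding rowapp_def by simp

lemma mat_mv: "mat s *v (u::complex^'n) = s *s u"
  unfolding matrix_vector_mult_def mat_def vec_eq_iff
  by (simp add: if_distrib[of "\<lambda>t. t * _"] cong: if_cong)

lemma vm_mat: "(u::complex^'n) v* mat s = s *s u"
  unfolding vector_matrix_mult_def mat_def vec_eq_iff
  by (simp add: if_distrib[of "\<lambda>t. _ * t"] mult.commute cong: if_cong)

lemma vm_diff: "(u::complex^'n) v* (X - Y) = u v* X - u v* Y"
  unfolding vector_matrix_mult_def vec_eq_iff
  by (simp add: right_diff_distrib sum_subtractf)

lemma outer_0: "outer 0 d = 0"
  unfolding outer_def by (simp add: vec_eq_iff)

lemma outer_0r: "outer c 0 = 0"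
  unfolding outer_def by (simp add: vec_eq_iff)

lemma inv_lr:
  assumes "invertible (g::complex^'n^'n)"
  shows "g ** matrix_inv g = mat 1" "matrix_inv g ** g = mat 1"
proof -
  from assms obtain A' where "g ** A' = mat 1 \<and> A' ** g = mat 1" unfolding invertible_def by blast
  then have "g ** matrix_inv g = mat 1 \<and> matrix_inv g ** g = mat 1"
    unfolding matrix_inv_def by (rule someI)
  then show "g ** matrix_inv g = mat 1" "matrix_inv g ** g = mat 1" by auto
qed

lemma solve_s:
  fixes x y :: "complex^'n"
  assumes "k \<noteq> 0" "l *s x = k *s y"
  shows "y = (l / k) *s x"
proof -
  have "y = (1/k * k) *s y" using assms by simp
  also have "\<dots> = (1/k) *s (k *s y)" by (simp add: vector_smult_assoc)
  also have "\<dots> = (1/k) *s (l *s x)" using assms by simp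
  also have "\<dots> = (l/k) *s x" by (simp add: vector_smult_assoc)
  finally show ?thesis .
qed

lemma row_eval:
  fixes G :: "complex^'n^'n"
  assumes "d \<noteq> 0" "d v* G = l *s d"
  shows "l \<in> Eval G"
proof (rule ccontr)
  assume "l \<notin> Eval G"
  then have "\<forall>v. (G - mat l) *v v = 0 \<longrightarrow> v = 0"
    unfolding Eval_def by (auto simp: matrix_vector_mult_diff_rdistrib mat_mv)
  then obtain B where "B ** (G - mat l) = mat 1" using matrix_left_invertible_ker by blast
  then have "(G - mat l) ** B = mat 1" using matrix_left_right_inverse by blast
  then obtain B' where "B' ** transpose (G - mat l) = mat 1" using left_invertible_transpose by blast
  then have "\<forall>v. transpose (G - mat l) *v v = 0 \<longrightarrow> v = 0" using matrix_left_invertible_ker by blast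
  moreover have "transpose (G - mat l) *v d = 0" using assms(2) by (simp add: vm_diff vm_mat)
  ultimately show False using assms(1) by blast
qed

lemma cis_shift: "x = y + 2*pi \<Longrightarrow> cis x = cis y"
  by (simp add: complex_eq_iff)


theorem mainTheorem8:
  fixes A B g :: "complex^'k^'k" and c1 c2 d1 d2 :: "complex^'k"
    and j :: nat and \<omega> :: real
  assumes "even j" and "j < 2 * CARD('k)"
    and "-pi < \<omega>" and "\<omega> < pi"
    and "(A, B, c1, c2, d1, d2) \<in> M_rho j \<omega>"
    and "rho_invariant_by j \<omega> A B c1 c2 d1 d2 g"
  defines "G \<equiv> mat (cis (- (real j * pi / (2 * real CARD('k))))) ** g ** g ** A"
  defines "k \<equiv> CARD('k)"
  shows "c1 \<noteq> 0 \<and> c2 \<noteq> 0 \<and> d1 \<noteq> 0 \<and> d2 \<noteq> 0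
    \<and> {Omega_j k j * omega_r k (int j div 2), Omega_j k j * omega_r k (int j),
        Omega_j k j * omega_r k (int k - int j div 2 - 1), Omega_j k j * omega_r k (int k - 1)}
       \<subseteq> Eval G
    \<and> c1 \<in> Evec G (Omega_j k j * omega_r k (int j div 2))
    \<and> c2 \<in> Evec G (Omega_j k j * omega_r k (int j))
    \<and> d1 \<in> Ecovec G (Omega_j k j * omega_r k (int k - int j div 2 - 1))
    \<and> d2 \<in> Ecovec G (Omega_j k j * omega_r k (int k - 1))"
proof -
  define K where "K = real CARD('k)"
  have K0: "K > 0" unfolding K_def by simp
  define a where "a = cis (pi / (2 * K))"
  define b where "b = cis (real j * pi / (4 * K))"
  define b3 where "b3 = cis (3 * real j * pi / (4 * K))"
  define b4 where "b4 = cis (real j * pi / K)"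
  define e where "e = cis \<omega>"
  define e' where "e' = cis (- \<omega>)"
  define s where "s = cis (- (real j * pi / (2 * K)))"
  have MN: "monad_nonsingular A B c1 c2 d1 d2" using assms(5) unfolding M_rho_def by simp
  have R: "rho_invariant_by j \<omega> A B c1 c2 d1 d2 g" by fact
  have ginv: "invertible g" using R unfolding rho_invariant_by_def Let_def by simp
  have Ainv: "invertible A" using MN unfolding monad_nonsingular_def by simp
  have hA: "mat b4 ** A = g ** A ** matrix_inv g"
    using R unfolding rho_invariant_by_def Let_def b4_def K_def by simp
  have h1: "(a*b) *s c1 = e *s (g *v c2)"
    using R unfolding rho_invariant_by_def Let_def a_def b_def e_def K_def by simp
  have h2: "(a*b3) *s c2 = e' *s (g *v (A *v c1))"
    using R unfolding rho_invariant_by_def Let_def a_def b3_def e'_def K_def by simp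
  have h3: "(a*b3) *s d1 = e' *s (d2 v* matrix_inv g)"
    using R unfolding rho_invariant_by_def Let_def a_def b3_def e'_def K_def by simp
  have h4: "(a*b) *s d2 = e *s (d1 v* (matrix_inv A ** matrix_inv g))"
    using R unfolding rho_invariant_by_def Let_def a_def b_def e_def K_def by simp
  have nz: "a \<noteq> 0" "b \<noteq> 0" "b3 \<noteq> 0" "b4 \<noteq> 0" "e \<noteq> 0" "e' \<noteq> 0" "s \<noteq> 0"
    unfolding a_def b_def b3_def b4_def e_def e'_def s_def by simp_all
  note gi = inv_lr[OF ginv]
  note Ai = inv_lr[OF Ainv]
  define k1 where "k1 = a*b/e"
  define k2 where "k2 = a*b3/e'"
  define k3 where "k3 = a*b3/e'"
  define k4 where "k4 = a*b/e"
  have k0: "k1 \<noteq> 0" "k2 \<noteq> 0" "k3 \<noteq> 0" "k4 \<noteq> 0" unfolding k1_def k2_def k3_def k4_def using nz by auto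
  have V1: "g *v c2 = k1 *s c1" unfolding k1_def by (rule solve_s[OF nz(5) h1])
  have V2: "g *v (A *v c1) = k2 *s c2" unfolding k2_def by (rule solve_s[OF nz(6) h2])
  have V3: "d2 v* matrix_inv g = k3 *s d1" unfolding k3_def by (rule solve_s[OF nz(6) h3])
  have V4: "d1 v* (matrix_inv A ** matrix_inv g) = k4 *s d2" unfolding k4_def by (rule solve_s[OF nz(5) h4])
  have VA: "g ** A = mat b4 ** A ** g"
  proof -
    have "mat b4 ** A ** g = g ** A ** (matrix_inv g ** g)" by (simp add: hA matrix_mul_assoc)
    then show ?thesis using gi by simp
  qed
  have V3': "d1 v* g = (1/k3) *s d2"
  proof -
    have "d2 = (d2 v* matrix_inv g) v* g" by (simp add: vector_matrix_mul_assoc gi)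
    also have "\<dots> = k3 *s (d1 v* g)" by (simp add: V3 scalar_vector_matrix_assoc)
    finally have "1 *s d2 = k3 *s (d1 v* g)" by simp
    from solve_s[OF k0(3) this] show ?thesis .
  qed
  have V4': "(d2 v* g) v* A = (1/k4) *s d1"
  proof -
    have m: "matrix_inv A ** matrix_inv g ** (g ** A) = mat 1"
    proof -
      have "matrix_inv A ** matrix_inv g ** (g ** A) = matrix_inv A ** (matrix_inv g ** g) ** A"
        by (simp add: matrix_mul_assoc)
      then show ?thesis using gi Ai by simp
    qed
    have "d1 = (d1 v* (matrix_inv A ** matrix_inv g)) v* (g ** A)"
      by (simp add: vector_matrix_mul_assoc m)
    also have "\<dots> = k4 *s ((d2 v* g) v* A)" by (simp add: V4 scalar_vector_matrix_assoc vector_matrix_mul_assoc)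
    finally have "1 *s d1 = k4 *s ((d2 v* g) v* A)" by simp
    from solve_s[OF k0(4) this] show ?thesis .
  qed
  have Gs: "G = mat s ** (g ** g ** A)" unfolding G_def s_def K_def by (simp add: matrix_mul_assoc)
  have Gv: "G *v u = s *s (g *v (g *v (A *v u)))" for u
    unfolding Gs by (simp add: matrix_vector_mul_assoc[symmetric] mat_mv)
  have Gr: "u v* G = s *s (((u v* g) v* g) v* A)" for u
    unfolding Gs by (simp add: vector_matrix_mul_assoc[symmetric] vm_mat scalar_vector_matrix_assoc)
  have E1: "G *v c1 = (s*k2*k1) *s c1"
    by (simp add: Gv V2 vector_scalar_commute V1 vector_smult_assoc mult.assoc)
  have E2: "G *v c2 = (s*b4*k1*k2) *s c2"
  proof -
    have "g *v (A *v c2) = (g ** A) *v c2" by (simp add: matrix_vector_mul_assoc)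
    also have "\<dots> = b4 *s (A *v (g *v c2))"
      by (simp add: VA matrix_vector_mul_assoc[symmetric] mat_mv)
    finally have "g *v (A *v c2) = b4 *s (A *v (g *v c2))" .
    then show ?thesis
      by (simp add: Gv V1 V2 vector_scalar_commute vector_smult_assoc mult.assoc)
  qed
  have E3: "d1 v* G = (s*(1/k3)*(1/k4)) *s d1"
    by (simp add: Gr V3' V4' scalar_vector_matrix_assoc vector_smult_assoc mult.assoc)
  have E4: "d2 v* G = (s*b4*(1/k4)*(1/k3)) *s d2"
  proof -
    have "((d2 v* g) v* g) v* A = (d2 v* g) v* (g ** A)" by (simp only: vector_matrix_mul_assoc matrix_mul_assoc)
    also have "\<dots> = b4 *s (((d2 v* g) v* A) v* g)"
      by (simp add: VA vector_matrix_mul_assoc[symmetric] vm_mat scalar_vector_matrix_assoc)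
    finally have "((d2 v* g) v* g) v* A = b4 *s (((d2 v* g) v* A) v* g)" .
    then show ?thesis
      by (simp add: Gr V4' V3' scalar_vector_matrix_assoc vector_smult_assoc mult.assoc)
  qed
  (* nonvanishing *)
  have c12: "c1 = 0 \<longleftrightarrow> c2 = 0"
  proof
    assume "c1 = 0" then show "c2 = 0" using V2 k0 by simp
  next
    assume "c2 = 0" then show "c1 = 0" using V1 k0 by simp
  qed
  have d12: "d1 = 0 \<longleftrightarrow> d2 = 0"
  proof
    assume "d1 = 0" then show "d2 = 0" using V3' k0 by simp
  next
    assume "d2 = 0" then show "d1 = 0" using V4' k0 by simp
  qed
  have comm: "A ** B = B ** A" if "CD_mat c1 c2 d1 d2 = 0"
    using MN that unfolding monad_nonsingular_def by (simp add: algebra_simps)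
  have cnz: "c1 \<noteq> 0"
  proof
    assume "c1 = 0"
    with c12 have c: "c1 = 0" "c2 = 0" by auto
    then have "CD_mat c1 c2 d1 d2 = 0" unfolding CD_mat_def by (simp add: outer_0)
    from common_eig_left[OF comm[OF this]] obtain v x y where
      v: "v \<noteq> 0" "v v* A = x *s v" "v v* B = y *s v" by blast
    from v(1) obtain i where i: "v $ i \<noteq> 0" by (auto simp: vec_eq_iff)
    from MN obtain u1 u2 p q where
      w: "axis i 1 = - ((B - mat y) *v u1) + (A - mat x) *v u2 + p *s c1 + q *s c2"
      unfolding monad_nonsingular_def by blast
    have "rowapp v (axis i 1) = 0"
      unfolding w c vector_smult_rzero add_0_right
      by (simp only: rowapp_add rowapp_neg rowapp_mv) (simp add: v vm_diff vm_mat rowapp_zero_left)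
    moreover have "rowapp v (axis i 1) = v $ i"
      unfolding rowapp_def axis_def by (simp add: if_distrib[of "\<lambda>t. _ * t"] cong: if_cong)
    ultimately show False using i by simp
  qed
  have dnz: "d1 \<noteq> 0"
  proof
    assume "d1 = 0"
    with d12 have d: "d1 = 0" "d2 = 0" by auto
    then have "CD_mat c1 c2 d1 d2 = 0" unfolding CD_mat_def by (simp add: outer_0r)
    from common_eig[OF comm[OF this]] obtain v x y where
      v: "v \<noteq> 0" "A *v v = x *s v" "B *v v = y *s v" by blast
    from MN have "(A - mat x) *v v = 0 \<and> (B - mat y) *v v = 0 \<and> rowapp d1 v = 0 \<and> rowapp d2 v = 0 \<longrightarrow> v = 0"
      unfolding monad_nonsingular_def by blast
    then show False using v d by (simp add: matrix_vector_mult_diff_rdistrib mat_mv rowapp_zero_left)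
  qed
  (* scalars *)
  obtain m where jm: "j = 2 * m" using assms(1) by blast
  have K': "real k = K" unfolding k_def K_def by simp
  have jd: "int j div 2 = int m" using jm by simp
  have L1: "s*k2*k1 = Omega_j k j * omega_r k (int j div 2)"
    unfolding jd Omega_j_def omega_r_def K' s_def k1_def k2_def a_def b_def b3_def e_def e'_def jm
    by (simp add: cis_mult cis_divide) (rule arg_cong[where f=cis], simp add: field_simps K0[THEN less_imp_neq, symmetric])
  have L2: "s*b4*k1*k2 = Omega_j k j * omega_r k (int j)"
    unfolding Omega_j_def omega_r_def K' s_def k1_def k2_def a_def b_def b3_def b4_def e_def e'_def jm
    by (simp add: cis_mult cis_divide) (rule arg_cong[where f=cis], simp add: field_simps K0[THEN less_imp_neq, symmetric])
  have L3: "s*(1/k3)*(1/k4) = Omega_j k j * omega_r k (int k - int j div 2 - 1)"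
    unfolding jd Omega_j_def omega_r_def K' s_def k3_def k4_def a_def b_def b3_def e_def e'_def jm
    by (simp add: cis_mult cis_divide K') (rule sym, rule cis_shift, simp add: field_simps K0[THEN less_imp_neq, symmetric])
  have L4: "s*b4*(1/k4)*(1/k3) = Omega_j k j * omega_r k (int k - 1)"
    unfolding Omega_j_def omega_r_def K' s_def k3_def k4_def a_def b_def b3_def b4_def e_def e'_def jm
    by (simp add: cis_mult cis_divide K') (rule sym, rule cis_shift, simp add: field_simps K0[THEN less_imp_neq, symmetric])
  have c2nz: "c2 \<noteq> 0" using cnz c12 by blast
  have d2nz: "d2 \<noteq> 0" using dnz d12 by blast
  have F1: "G *v c1 = (Omega_j k j * omega_r k (int j div 2)) *s c1" using E1 L1 by simp
  have F2: "G *v c2 = (Omega_j k j * omega_r k (int j)) *s c2" using E2 L2 by simp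
  have F3: "d1 v* G = (Omega_j k j * omega_r k (int k - int j div 2 - 1)) *s d1" using E3 L3 by simp
  have F4: "d2 v* G = (Omega_j k j * omega_r k (int k - 1)) *s d2" using E4 L4 by simp
  have "Omega_j k j * omega_r k (int j div 2) \<in> Eval G" using F1 cnz unfolding Eval_def by blast
  moreover have "Omega_j k j * omega_r k (int j) \<in> Eval G" using F2 c2nz unfolding Eval_def by blast
  moreover have "Omega_j k j * omega_r k (int k - int j div 2 - 1) \<in> Eval G" using row_eval[OF dnz F3] .
  moreover have "Omega_j k j * omega_r k (int k - 1) \<in> Eval G" using row_eval[OF d2nz F4] .
  ultimately show ?thesis
    using cnz c2nz dnz d2nz F1 F2 F3 F4 unfolding Evec_def Ecovec_def by simp
qed

end
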